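(* Let $g(x)=e^{-5x^2}$, $s_1=1.5$, $s_2=-1.5$, $\Phi_0(x)=x^2$, and let $\psi_1(x)=\widetilde\psi(2x)$, where $\widetilde\psi(x)=e^{-x^2/(1-x^2)}$ for $|x|<1$ and $\widetilde\psi(x)=0$ otherwise. For $\varepsilon>0$ and $y>0$ define $$u^\varepsilon(x,y)=g(x-s_1-y)\,e^{i\Phi_0(x-y)/\varepsilon}+g(x-s_2+y)\,e^{i\Phi_0(x+y)/\varepsilon},$$ which is the value at time $T=1$ of the exact solution of the one-dimensional wave equation $u_{tt}=y^2u_{xx}$ with initial data $u(0,x)=(g(x-s_1)+g(x-s_2))e^{i\Phi_0(x)/\varepsilon}$ and $u_t(0,x)=-y\big(g'(x-s_1)+\tfrac{i\Phi_0'(x)}{\varepsilon}g(x-s_1)\big)e^{i\Phi_0(x)/\varepsilon}+y\big(g'(x-s_2)+\tfrac{i\Phi_0'(x)}{\varepsilon}g(x-s_2)\big)e^{i\Phi_0(x)/\varepsilon}$. Define $$\mathcal Q^\varepsilon_1(y)=\int_{\mathbb R}|u^\varepsilon(x,y)|^2\,\psi_1(x)\,dx .$$ Then for every compact interval $[a,b]\subset(0,\infty)$ and every integer $k\ge 0$ there is a constant $C_k$, independent of $\varepsilon\in(0,1]$, such that $$\sup_{y\in[a,b]}\left|\frac{d^k}{dy^k}\mathcal Q^\varepsilon_1(y)\right|\le C_k\qquad\text{for all }\varepsilon\in(0,1].$$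
   Context: Here $\varepsilon$ is a small positive parameter representing the wavelength; $\psi_1$ is a smooth compactly supported real-valued function on $\mathbb R$. The point of the statement is that the bound on all $y$-derivatives of the quadratic quantity $\mathcal Q_1^\varepsilon$ is uniform in $\varepsilon$, even though $u^\varepsilon$ itself oscillates on scale $\varepsilon$ in both $x$ and $y$. *)

theory Defs
  imports "HOL-Analysis.Analysis"
begin

definition g :: "real \<Rightarrow> real" where
  "g x = exp (-5 * x\<^sup>2)"

definition s1 :: real where "s1 = 3/2"
definition s2 :: real where "s2 = -3/2"

definition Phi0 :: "real \<Rightarrow> real" where
  "Phi0 x = x\<^sup>2"

definition psi_tilde :: "real \<Rightarrow> real" where
  "psi_tilde x = (if \<bar>x\<bar> < 1 then exp (- x\<^sup>2 / (1 - x\<^sup>2)) else 0)"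

definition psi1 :: "real \<Rightarrow> real" where
  "psi1 x = psi_tilde (2 * x)"

definition u :: "real \<Rightarrow> real \<Rightarrow> real \<Rightarrow> complex" where
  "u eps x y =
     complex_of_real (g (x - s1 - y)) * exp (\<i> * complex_of_real (Phi0 (x - y) / eps))
   + complex_of_real (g (x - s2 + y)) * exp (\<i> * complex_of_real (Phi0 (x + y) / eps))"

definition Q1 :: "real \<Rightarrow> real \<Rightarrow> real" where
  "Q1 eps y = (\<integral>x. (cmod (u eps x y))\<^sup>2 * psi1 x \<partial>lborel)"

end

theory Submission
  imports Defs "HOL-Computational_Algebra.Polynomial"
begin


fun P :: "nat \<Rightarrow> real poly" where
  "P 0 = [:1:]"
| "P (Suc j) = pCons 0 (pCons 0 (P j - pderiv (P j)))"

definition hb :: "nat \<Rightarrow> real \<Rightarrow> real" where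
  "hb j s = (if s > 0 then poly (P j) (1/s) * exp (-(1/s)) else 0)"

lemma poly_exp_lim: "((\<lambda>z. poly p z * exp (-z)) \<longlongrightarrow> (0::real)) at_top"
proof -
  have "((\<lambda>z. \<Sum>i\<le>degree p. coeff p i * (z ^ i / exp z)) \<longlongrightarrow> (\<Sum>i\<le>degree p. coeff p i * 0)) at_top"
    by (intro tendsto_sum tendsto_mult tendsto_const tendsto_power_div_exp_0)
  moreover have "\<And>z. (\<Sum>i\<le>degree p. coeff p i * (z ^ i / exp z)) = poly p z * exp (-z)"
    by (simp add: poly_altdef sum_distrib_right exp_minus divide_inverse mult.assoc)
  ultimately show ?thesis by simp
qed

lemma hb_deriv_pos:
  assumes "s > 0"
  shows "(hb j has_real_derivative hb (Suc j) s) (at s)"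
proof -
  have "((\<lambda>s. poly (P j) (1/s) * exp (-(1/s))) has_real_derivative hb (Suc j) s) (at s)"
    using assms
    apply (auto intro!: derivative_eq_intros simp: hb_def)
    apply (simp add: field_simps power2_eq_square)
    done
  then show ?thesis
    by (rule has_field_derivative_transform_within_open[where S="{0<..}"]) (use assms in \<open>auto simp: hb_def\<close>)
qed

lemma hb_deriv_neg:
  assumes "s < 0"
  shows "(hb j has_real_derivative hb (Suc j) s) (at s)"
proof -
  have "((\<lambda>s. 0) has_real_derivative hb (Suc j) s) (at s)"
    using assms by (auto intro!: derivative_eq_intros simp: hb_def)
  then show ?thesis
    by (rule has_field_derivative_transform_within_open[where S="{..<0}"]) (use assms in \<open>auto simp: hb_def\<close>)
qed

lemma hb_deriv_0:
  "(hb j has_real_derivative hb (Suc j) 0) (at 0)"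
proof -
  have "((\<lambda>x. (hb j x - hb j 0) / (x - 0)) \<longlongrightarrow> 0) (at 0)"
  proof (rule filterlim_split_at)
    show "((\<lambda>x. (hb j x - hb j 0) / (x - 0)) \<longlongrightarrow> 0) (at_left 0)"
    proof (rule tendsto_eventually)
      have "\<forall>\<^sub>F x in at_left (0::real). x < 0" by (simp add: eventually_at_filter)
      then show "\<forall>\<^sub>F x in at_left 0. (hb j x - hb j 0) / (x - 0) = (0::real)"
        by eventually_elim (auto simp: hb_def)
    qed
  next
    have lim: "((\<lambda>z. poly (pCons 0 (P j)) z * exp (-z)) \<longlongrightarrow> (0::real)) at_top"
      by (rule poly_exp_lim)
    have "((\<lambda>x. poly (pCons 0 (P j)) (inverse x) * exp (-(inverse x))) \<longlongrightarrow> (0::real)) (at_right 0)"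
      by (rule filterlim_compose[OF lim filterlim_inverse_at_top_right])
    then show "((\<lambda>x. (hb j x - hb j 0) / (x - 0)) \<longlongrightarrow> 0) (at_right 0)"
    proof (rule Lim_transform_eventually)
      have "\<forall>\<^sub>F x in at_right (0::real). x > 0" by (simp add: eventually_at_filter)
      then show "\<forall>\<^sub>F x in at_right 0. poly (pCons 0 (P j)) (inverse x) * exp (-(inverse x)) = (hb j x - hb j 0) / (x - 0)"
        by eventually_elim (auto simp: hb_def field_simps)
    qed
  qed
  then show ?thesis by (simp add: has_field_derivative_iff hb_def)
qed

lemma hb_deriv: "(hb j has_real_derivative hb (Suc j) s) (at s)"
  using hb_deriv_0 hb_deriv_neg hb_deriv_pos by (cases "s = 0") (auto simp: linorder_neq_iff)

lemma hb_deriv_chain[derivative_intros]: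
  "(f has_real_derivative f') (at x within A) \<Longrightarrow>
   ((\<lambda>x. hb j (f x)) has_real_derivative hb (Suc j) (f x) * f') (at x within A)"
  using DERIV_chain[OF hb_deriv, of f f' x A j] by (simp add: o_def)

lemma hb_cont: "continuous_on S (hb j)"
  by (meson DERIV_isCont continuous_at_imp_continuous_on hb_deriv)

lemma hb_cont_intro[continuous_intros]: "continuous_on S f \<Longrightarrow> continuous_on S (\<lambda>x. hb j (f x))"
  using continuous_on_compose2[OF hb_cont[of UNIV j]] by auto

lemma psi_tilde_hd: "psi_tilde x = exp 1 * hb 0 (1 - x^2)"
proof (cases "\<bar>x\<bar> < 1")
  case True
  then have "x^2 < 1" by (simp add: abs_square_less_1)
  then have "- x\<^sup>2 / (1 - x\<^sup>2) = 1 + (-(1 / (1 - x^2)))" by (simp add: field_simps)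
  then have e2: "exp 1 * exp (-(1/(1-x^2))) = exp(- x\<^sup>2 / (1 - x\<^sup>2))" by (simp only: exp_add)
  have h1: "psi_tilde x = exp(- x\<^sup>2 / (1 - x\<^sup>2))" using True by (simp add: psi_tilde_def)
  have h2: "hb 0 (1 - x^2) = exp (-(1/(1-x^2)))" using \<open>x^2<1\<close> by (simp add: hb_def)
  show ?thesis unfolding h1 h2 e2 ..
next
  case False
  then have "x^2 \<ge> 1" by (simp add: abs_square_less_1[symmetric])
  then show ?thesis using False by (simp add: psi_tilde_def hb_def)
qed



inductive_set Alg :: "(real \<Rightarrow> real \<Rightarrow> real) set" where
  Const: "(\<lambda>y t. c) \<in> Alg"
| Tv: "(\<lambda>y t. t) \<in> Alg"
| Yv: "(\<lambda>y t. y) \<in> Alg"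
| Inv: "(\<lambda>y t. 1 / y) \<in> Alg"
| Hb: "(\<lambda>y t. hb j (1 - (2 * t / y)^2)) \<in> Alg"
| Exp: "f \<in> Alg \<Longrightarrow> (\<lambda>y t. exp (f y t)) \<in> Alg"
| Add: "f \<in> Alg \<Longrightarrow> q \<in> Alg \<Longrightarrow> (\<lambda>y t. f y t + q y t) \<in> Alg"
| Diff: "f \<in> Alg \<Longrightarrow> q \<in> Alg \<Longrightarrow> (\<lambda>y t. f y t - q y t) \<in> Alg"
| Mul: "f \<in> Alg \<Longrightarrow> q \<in> Alg \<Longrightarrow> (\<lambda>y t. f y t * q y t) \<in> Alg"

definition Om :: "(real \<times> real) set" where "Om = {0<..} \<times> UNIV"

definition good :: "(real \<Rightarrow> real \<Rightarrow> real) \<Rightarrow> (real \<Rightarrow> real \<Rightarrow> real) \<Rightarrow> bool" where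
  "good f f' \<longleftrightarrow> (\<forall>y t. 0 < y \<longrightarrow> ((\<lambda>y. f y t) has_real_derivative f' y t) (at y))"

lemma Alg_props:
  assumes "f \<in> Alg"
  shows "continuous_on Om (\<lambda>p. f (fst p) (snd p)) \<and> (\<exists>f'\<in>Alg. good f f')"
  using assms
proof induction
  case (Const c)
  have "good (\<lambda>y t. c) (\<lambda>y t. 0)" unfolding good_def by (auto intro!: derivative_eq_intros)
  moreover have "(\<lambda>y t. 0::real) \<in> Alg" by (rule Alg.Const)
  moreover have "continuous_on Om (\<lambda>p. c)" by (rule continuous_on_const)
  ultimately show ?case by blast
next
  case Tv
  have "good (\<lambda>y t. t) (\<lambda>y t. 0)" unfolding good_def by (auto intro!: derivative_eq_intros)
  moreover have "(\<lambda>y t. 0::real) \<in> Alg" by (rule Alg.Const)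
  moreover have "continuous_on Om (\<lambda>p. snd p)" by (intro continuous_intros)
  ultimately show ?case by auto
next
  case Yv
  have "good (\<lambda>y t. y) (\<lambda>y t. 1)" unfolding good_def by (auto intro!: derivative_eq_intros)
  moreover have "(\<lambda>y t. 1::real) \<in> Alg" by (rule Alg.Const)
  moreover have "continuous_on Om (\<lambda>p. fst p)" by (intro continuous_intros)
  ultimately show ?case by auto
next
  case Inv
  have c: "continuous_on Om (\<lambda>p. 1 / fst p)"
    by (rule continuous_intros)+ (auto simp: Om_def)
  have "(\<lambda>y t. (-1) * ((1/y) * (1/y))) \<in> Alg" by (intro Alg.intros)
  moreover have "good (\<lambda>y t. 1 / y) (\<lambda>y t. (-1) * ((1/y) * (1/y)))"
    unfolding good_def
    apply (intro allI impI)
    apply (rule derivative_eq_intros refl | simp)+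
    apply ((simp add: power2_eq_square field_simps)?)
    done
  ultimately show ?case using c by auto
next
  case (Hb j)
  have c: "continuous_on Om (\<lambda>p. hb j (1 - (2 * snd p / fst p)^2))"
    by (rule continuous_intros)+ (auto simp: Om_def)
  have "(\<lambda>y t. hb (Suc j) (1 - (2 * t / y)^2) * (8 * (t * (t * ((1/y) * ((1/y) * (1/y))))))) \<in> Alg"
    by (intro Alg.intros)
  moreover have "good (\<lambda>y t. hb j (1 - (2 * t / y)^2)) (\<lambda>y t. hb (Suc j) (1 - (2 * t / y)^2) * (8 * (t * (t * ((1/y) * ((1/y) * (1/y)))))))"
    unfolding good_def
    apply (intro allI impI)
    apply (rule derivative_eq_intros refl | simp)+
    apply ((simp add: field_simps power2_eq_square power3_eq_cube)?)
    done
  ultimately show ?case using c by auto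
next
  case (Exp f)
  then obtain f' where f': "f' \<in> Alg" "good f f'" by auto
  have "(\<lambda>y t. exp (f y t) * f' y t) \<in> Alg" using f' Exp by (intro Alg.intros)
  moreover have "good (\<lambda>y t. exp (f y t)) (\<lambda>y t. exp (f y t) * f' y t)"
    using f'(2) unfolding good_def by (auto intro!: derivative_eq_intros)
  moreover have "continuous_on Om (\<lambda>p. exp (f (fst p) (snd p)))" using Exp by (intro continuous_intros) auto
  ultimately show ?case by auto
next
  case (Add f q)
  then obtain f' q' where f': "f' \<in> Alg" "good f f'" "q' \<in> Alg" "good q q'" by auto
  have "(\<lambda>y t. f' y t + q' y t) \<in> Alg" using f' by (intro Alg.intros)
  moreover have "good (\<lambda>y t. f y t + q y t) (\<lambda>y t. f' y t + q' y t)"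
    using f' unfolding good_def by (auto intro!: derivative_eq_intros)
  moreover have "continuous_on Om (\<lambda>p. f (fst p) (snd p) + q (fst p) (snd p))" using Add by (intro continuous_intros) auto
  ultimately show ?case by auto
next
  case (Diff f q)
  then obtain f' q' where f': "f' \<in> Alg" "good f f'" "q' \<in> Alg" "good q q'" by auto
  have "(\<lambda>y t. f' y t - q' y t) \<in> Alg" using f' by (intro Alg.intros)
  moreover have "good (\<lambda>y t. f y t - q y t) (\<lambda>y t. f' y t - q' y t)"
    using f' unfolding good_def by (auto intro!: derivative_eq_intros)
  moreover have "continuous_on Om (\<lambda>p. f (fst p) (snd p) - q (fst p) (snd p))" using Diff by (intro continuous_intros) auto
  ultimately show ?case by auto
next
  case (Mul f q)
  then obtain f' q' where f': "f' \<in> Alg" "good f f'" "q' \<in> Alg" "good q q'" by auto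
  have "(\<lambda>y t. f' y t * q y t + f y t * q' y t) \<in> Alg" using f' Mul by (intro Alg.intros)
  moreover have "good (\<lambda>y t. f y t * q y t) (\<lambda>y t. f' y t * q y t + f y t * q' y t)"
    using f' unfolding good_def by (auto intro!: derivative_eq_intros)
  moreover have "continuous_on Om (\<lambda>p. f (fst p) (snd p) * q (fst p) (snd p))" using Mul by (intro continuous_intros) auto
  ultimately show ?case by auto
qed

definition dy :: "(real \<Rightarrow> real \<Rightarrow> real) \<Rightarrow> (real \<Rightarrow> real \<Rightarrow> real)" where
  "dy f = (SOME f'. f' \<in> Alg \<and> good f f')"

lemma dy: assumes "f \<in> Alg" shows "dy f \<in> Alg \<and> good f (dy f)"
proof -
  have "\<exists>f'. f' \<in> Alg \<and> good f f'" using Alg_props[OF assms] by auto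
  then show ?thesis unfolding dy_def by (rule someI_ex)
qed

lemma dy_iter: "f \<in> Alg \<Longrightarrow> (dy ^^ k) f \<in> Alg"
  by (induction k) (simp_all add: dy)

lemma Alg_cont: "f \<in> Alg \<Longrightarrow> continuous_on Om (\<lambda>p. f (fst p) (snd p))"
  using Alg_props by blast



lemma Alg_cont_t:
  assumes "F \<in> Alg" "0 < y"
  shows "continuous_on S (\<lambda>t. F y t)"
proof -
  have "continuous_on S (\<lambda>t. (\<lambda>p. F (fst p) (snd p)) (y, t))"
    by (rule continuous_on_compose2[OF Alg_cont[OF assms(1)]]) (use assms(2) in \<open>auto simp: Om_def intro!: continuous_intros\<close>)
  then show ?thesis by simp
qed

lemma Alg_cont_sub:
  assumes "F \<in> Alg" "A \<subseteq> Om"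
  shows "continuous_on A (\<lambda>(y, t). F y t)"
  using continuous_on_subset[OF Alg_cont[OF assms(1)] assms(2)] by (simp add: split_beta')

definition J :: "real \<Rightarrow> (real \<Rightarrow> real) \<Rightarrow> (real \<Rightarrow> real \<Rightarrow> real) \<Rightarrow> real \<Rightarrow> real" where
  "J R c F y = integral {-R..R} (\<lambda>t. c t * F y t)"

lemma J_deriv:
  assumes F: "F \<in> Alg" and c: "continuous_on UNIV c" and y: "0 < y"
  shows "(J R c F has_real_derivative J R c (dy F) y) (at y)"
proof -
  have dF: "dy F \<in> Alg" "good F (dy F)" using dy[OF F] by auto
  have "((\<lambda>y. integral (cbox (-R) R) (\<lambda>t. c t * F y t)) has_field_derivative
          integral (cbox (-R) R) (\<lambda>t. c t * dy F y t)) (at y within {0<..})"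
  proof (rule leibniz_rule_field_derivative[where fx="\<lambda>y t. c t * dy F y t"])
    fix x t assume "x \<in> {0::real<..}" "t \<in> cbox (-R) R"
    then have d: "((\<lambda>y. F y t) has_real_derivative dy F x t) (at x)" using dF(2) by (auto simp: good_def)
    show "((\<lambda>x. c t * F x t) has_field_derivative c t * dy F x t) (at x within {0<..})"
      by (rule has_field_derivative_at_within[OF DERIV_cmult[OF d]])
  next
    fix x assume "x \<in> {0::real<..}"
    then have "continuous_on (cbox (-R) R) (\<lambda>t. F x t)" by (intro Alg_cont_t[OF F]) auto
    moreover have "continuous_on (cbox (-R) R) c" by (rule continuous_on_subset[OF c]) auto
    ultimately have "continuous_on (cbox (-R) R) (\<lambda>t. c t * F x t)" by (intro continuous_on_mult)
    then show "(\<lambda>t. c t * F x t) integrable_on cbox (-R) R"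
      by (rule integrable_continuous)
  next
    have "continuous_on ({0<..} \<times> cbox (-R) R) (\<lambda>(y, t). dy F y t)"
      by (rule Alg_cont_sub[OF dF(1)]) (auto simp: Om_def)
    moreover have "continuous_on ({0<..} \<times> cbox (-R) R) (\<lambda>p::real\<times>real. c (snd p))"
      by (rule continuous_on_compose2[OF c]) (intro continuous_intros, auto)
    ultimately have "continuous_on ({0<..} \<times> cbox (-R) R) (\<lambda>p::real\<times>real. c (snd p) * (\<lambda>(y, t). dy F y t) p)"
      by (intro continuous_intros)
    then show "continuous_on ({0<..} \<times> cbox (-R) R) (\<lambda>(x, t). c t * dy F x t)"
      by (simp add: split_beta')
  next
    show "y \<in> {0<..}" using y by simp
  next
    show "convex {0::real<..}" by (rule convex_real_interval)
  qed
  then have "((\<lambda>y. integral {-R..R} (\<lambda>t. c t * F y t)) has_field_derivative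
          integral {-R..R} (\<lambda>t. c t * dy F y t)) (at y)"
    using at_within_open[of y "{0<..}"] y by (simp only: cbox_interval) simp
  moreover have "J R c F = (\<lambda>y. integral {-R..R} (\<lambda>t. c t * F y t))" by (simp add: J_def fun_eq_iff)
  ultimately show ?thesis by (simp add: J_def)
qed

lemma Alg_bound:
  assumes F: "F \<in> Alg" and a: "0 < a"
  obtains B where "B \<ge> 0" "\<And>y t. y \<in> {a..b} \<Longrightarrow> t \<in> {-R..R} \<Longrightarrow> \<bar>F y t\<bar> \<le> B"
proof -
  have cpt: "compact ({a..b} \<times> {-R..R})" by (intro compact_Times compact_Icc)
  have cont: "continuous_on ({a..b} \<times> {-R..R}) (\<lambda>(y, t). F y t)"
    by (rule Alg_cont_sub[OF F]) (use a in \<open>auto simp: Om_def\<close>)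
  obtain B where "B \<ge> 0" "\<And>p. p \<in> {a..b} \<times> {-R..R} \<Longrightarrow> norm ((\<lambda>(y, t). F y t) p) \<le> B"
    using continuous_on_compact_bound[OF cpt cont] by blast
  then show ?thesis using that by fastforce
qed

lemma J_bound:
  assumes F: "F \<in> Alg" and c: "continuous_on UNIV c" "\<And>t. \<bar>c t\<bar> \<le> 1" and y: "0 < y"
    and R: "0 \<le> R" and B: "\<And>t. t \<in> {-R..R} \<Longrightarrow> \<bar>F y t\<bar> \<le> B"
  shows "\<bar>J R c F y\<bar> \<le> B * (2 * R)"
proof -
  have "norm (integral {-R..R} (\<lambda>t. c t * F y t)) \<le> B * (R - - R)"
  proof (rule integral_bound)
    show "continuous_on {-R..R} (\<lambda>t. c t * F y t)"
      by (intro continuous_on_mult continuous_on_subset[OF c(1)] Alg_cont_t[OF F y]) auto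
  next
    fix t assume t: "t \<in> {-R..R}"
    have "\<bar>c t * F y t\<bar> = \<bar>c t\<bar> * \<bar>F y t\<bar>" by (simp add: abs_mult)
    also have "\<dots> \<le> 1 * B" using c(2)[of t] B[OF t] by (intro mult_mono) auto
    finally show "norm (c t * F y t) \<le> B" by simp
  qed (use R in auto)
  then show ?thesis by (simp add: J_def)
qed

lemma lborel_to_interval:
  fixes h :: "real \<Rightarrow> real"
  assumes h: "continuous_on UNIV h" and z: "\<And>t. t \<notin> {-R..R} \<Longrightarrow> h t = 0"
  shows "integral\<^sup>L lborel h = integral {-R..R} h"
proof -
  have "set_integrable lborel {-R..R} h"
    by (rule borel_integrable_atLeastAtMost') (rule continuous_on_subset[OF h], auto)
  moreover have "(\<lambda>x. indicator {-R..R} x *\<^sub>R h x) = h"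
    using z by (auto simp: fun_eq_iff indicator_def)
  ultimately have "integrable lborel h" by (simp add: set_integrable_def)
  then have 1: "(h has_integral integral\<^sup>L lborel h) UNIV" by (rule has_integral_integral_lborel)
  have "h integrable_on {-R..R}"
    by (rule integrable_continuous_real) (rule continuous_on_subset[OF h], auto)
  then have "(h has_integral integral {-R..R} h) {-R..R}" by (rule integrable_integral)
  then have 2: "(h has_integral integral {-R..R} h) UNIV"
    by (rule has_integral_on_superset) (use z in auto)
  show ?thesis using has_integral_unique[OF 1 2] .
qed



lemma cmod_two:
  fixes a b al be :: real
  shows "(cmod (complex_of_real a * exp (\<i> * complex_of_real al) + complex_of_real b * exp (\<i> * complex_of_real be)))\<^sup>2
         = a\<^sup>2 + b\<^sup>2 + 2 * a * b * cos (al - be)"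
proof -
  have "(cmod (complex_of_real a * exp (\<i> * complex_of_real al) + complex_of_real b * exp (\<i> * complex_of_real be)))\<^sup>2
     = (a * cos al + b * cos be)\<^sup>2 + (a * sin al + b * sin be)\<^sup>2"
    by (simp add: cmod_power2 Re_exp Im_exp)
  also have "\<dots> = a\<^sup>2 * ((sin al)\<^sup>2 + (cos al)\<^sup>2) + b\<^sup>2 * ((sin be)\<^sup>2 + (cos be)\<^sup>2) + 2 * a * b * (cos al * cos be + sin al * sin be)"
    by algebra
  also have "\<dots> = a\<^sup>2 + b\<^sup>2 + 2 * a * b * cos (al - be)"
    by (simp only: sin_cos_squared_add cos_diff)
  finally show ?thesis .
qed

definition A1 :: "real \<Rightarrow> real \<Rightarrow> real" where
  "A1 = (\<lambda>y t. exp ((-5) * ((t * (1/y) - 3/2 - y) * (t * (1/y) - 3/2 - y))))"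
definition A2 :: "real \<Rightarrow> real \<Rightarrow> real" where
  "A2 = (\<lambda>y t. exp ((-5) * ((t * (1/y) + 3/2 + y) * (t * (1/y) + 3/2 + y))))"
definition Ps :: "real \<Rightarrow> real \<Rightarrow> real" where
  "Ps = (\<lambda>y t. exp 1 * hb 0 (1 - (2 * t / y)^2))"
definition EE :: "real \<Rightarrow> real \<Rightarrow> real" where
  "EE = (\<lambda>y t. (1/y) * ((A1 y t * A1 y t + A2 y t * A2 y t) * Ps y t))"
definition DD :: "real \<Rightarrow> real \<Rightarrow> real" where
  "DD = (\<lambda>y t. (1/y) * ((2 * (A1 y t * A2 y t)) * Ps y t))"

lemma A1_Alg: "A1 \<in> Alg" unfolding A1_def by (intro Alg.intros)
lemma A2_Alg: "A2 \<in> Alg" unfolding A2_def by (intro Alg.intros)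
lemma Ps_Alg: "Ps \<in> Alg" unfolding Ps_def by (intro Alg.intros)
lemma EE_Alg: "EE \<in> Alg"
proof -
  have "(\<lambda>y t. (1/y) * ((A1 y t * A1 y t + A2 y t * A2 y t) * Ps y t)) \<in> Alg"
    using A1_Alg A2_Alg Ps_Alg by (intro Alg.intros)
  then show ?thesis by (simp add: EE_def)
qed
lemma DD_Alg: "DD \<in> Alg"
proof -
  have "(\<lambda>y t. (1/y) * ((2 * (A1 y t * A2 y t)) * Ps y t)) \<in> Alg"
    using A1_Alg A2_Alg Ps_Alg by (intro Alg.intros)
  then show ?thesis by (simp add: DD_def)
qed

lemma pointwise:
  assumes y: "0 < y" and e: "0 < eps"
  shows "(1/y) * ((cmod (u eps (t/y) y))\<^sup>2 * psi1 (t/y)) = EE y t + cos (4 * t / eps) * DD y t"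
proof -
  have ph: "Phi0 (t/y - y) / eps - Phi0 (t/y + y) / eps = - (4 * t / eps)"
    using y e by (simp add: Phi0_def field_simps power2_eq_square)
  have g1: "g (t/y - s1 - y) = A1 y t" by (simp add: g_def s1_def A1_def power2_eq_square)
  have g2: "g (t/y - s2 + y) = A2 y t" by (simp add: g_def s2_def A2_def power2_eq_square)
  have p: "psi1 (t/y) = Ps y t" by (simp add: psi1_def psi_tilde_hd Ps_def)
  have "(cmod (u eps (t/y) y))\<^sup>2 = (A1 y t)\<^sup>2 + (A2 y t)\<^sup>2 + 2 * A1 y t * A2 y t * cos (4 * t / eps)"
    unfolding u_def cmod_two g1 g2 ph by simp
  then show ?thesis by (simp add: p EE_def DD_def power2_eq_square algebra_simps)
qed



lemma Ps_zero:
  assumes y: "0 < y" and t: "y / 2 \<le> \<bar>t\<bar>"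
  shows "Ps y t = 0"
proof -
  have "1 \<le> \<bar>2 * t / y\<bar>" using y t by (simp add: abs_mult field_simps)
  then have "1 \<le> \<bar>2 * t / y\<bar> * \<bar>2 * t / y\<bar>" by (metis less_eq_real_def mult_le_cancel_left1 zero_less_one order_trans)
  then have "1 \<le> (2 * t / y)^2" by (simp add: power2_eq_square abs_mult_self_eq)
  then show ?thesis by (simp add: Ps_def hb_def)
qed

lemma Q1_repr:
  assumes y: "0 < y" "y < 2 * R" and e: "0 < eps"
  shows "Q1 eps y = J R (\<lambda>t. 1) EE y + J R (\<lambda>t. cos (4 * t / eps)) DD y"
proof -
  define f where "f x = (cmod (u eps x y))\<^sup>2 * psi1 x" for x
  have "Q1 eps y = (\<integral>x. f x \<partial>lborel)" by (simp add: Q1_def f_def)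
  also have "\<dots> = \<bar>1/y\<bar> *\<^sub>R (\<integral>t. f (0 + (1/y) * t) \<partial>lborel)"
    by (rule lborel_integral_real_affine) (use y in simp)
  also have "\<dots> = (\<integral>t. (1/y) * f (t/y) \<partial>lborel)"
    using y by (simp add: integral_mult_right_zero)
  also have "\<dots> = (\<integral>t. EE y t + cos (4 * t / eps) * DD y t \<partial>lborel)"
    using pointwise[OF y(1) e] by (simp add: f_def)
  also have "\<dots> = integral {-R..R} (\<lambda>t. EE y t + cos (4 * t / eps) * DD y t)"
  proof (rule lborel_to_interval)
    show "continuous_on UNIV (\<lambda>t. EE y t + cos (4 * t / eps) * DD y t)"
      using Alg_cont_t[OF EE_Alg y(1)] Alg_cont_t[OF DD_Alg y(1)] e
      by (intro continuous_intros) auto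
  next
    fix t assume "t \<notin> {-R..R}"
    then have "y / 2 \<le> \<bar>t\<bar>" using y by auto
    then show "EE y t + cos (4 * t / eps) * DD y t = 0"
      using Ps_zero[OF y(1)] by (simp add: EE_def DD_def)
  qed
  also have "\<dots> = integral {-R..R} (\<lambda>t. 1 * EE y t) + integral {-R..R} (\<lambda>t. cos (4 * t / eps) * DD y t)"
  proof -
    have c1: "continuous_on {-R..R} (\<lambda>t. EE y t)" by (rule Alg_cont_t[OF EE_Alg y(1)])
    have c2: "continuous_on {-R..R} (\<lambda>t. cos (4 * t / eps) * DD y t)"
      using Alg_cont_t[OF DD_Alg y(1)] e by (intro continuous_intros) auto
    show ?thesis
      using integral_add[OF integrable_continuous_real[OF c1] integrable_continuous_real[OF c2]] by simp
  qed
  finally show ?thesis by (simp add: J_def)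
qed

lemma deriv_Q:
  assumes e: "0 < eps" and R: "0 < R"
  shows "\<forall>y\<in>{0<..<2*R}. (deriv ^^ k) (Q1 eps) y
           = J R (\<lambda>t. 1) ((dy ^^ k) EE) y + J R (\<lambda>t. cos (4 * t / eps)) ((dy ^^ k) DD) y"
proof (induction k)
  case 0
  then show ?case using Q1_repr[OF _ _ e] by auto
next
  case (Suc k)
  have c1: "continuous_on UNIV (\<lambda>t::real. 1::real)" by (rule continuous_on_const)
  have c2: "continuous_on UNIV (\<lambda>t. cos (4 * t / eps))" using e by (intro continuous_intros) auto
  show ?case
  proof
    fix y assume y: "y \<in> {0<..<2*R}"
    have "((\<lambda>y. J R (\<lambda>t. 1) ((dy ^^ k) EE) y + J R (\<lambda>t. cos (4 * t / eps)) ((dy ^^ k) DD) y) has_real_derivative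
           J R (\<lambda>t. 1) (dy ((dy ^^ k) EE)) y + J R (\<lambda>t. cos (4 * t / eps)) (dy ((dy ^^ k) DD)) y) (at y)"
      using y by (intro DERIV_add J_deriv dy_iter EE_Alg DD_Alg c1 c2) auto
    then have "((deriv ^^ k) (Q1 eps) has_real_derivative
           J R (\<lambda>t. 1) (dy ((dy ^^ k) EE)) y + J R (\<lambda>t. cos (4 * t / eps)) (dy ((dy ^^ k) DD)) y) (at y)"
      by (rule has_field_derivative_transform_within_open[where S="{0<..<2*R}"]) (use Suc.IH y in auto)
    then show "(deriv ^^ Suc k) (Q1 eps) y
           = J R (\<lambda>t. 1) ((dy ^^ Suc k) EE) y + J R (\<lambda>t. cos (4 * t / eps)) ((dy ^^ Suc k) DD) y"
      by (simp add: DERIV_imp_deriv)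
  qed
qed

theorem mainTheorem1:
  fixes a b :: real and k :: nat
  assumes "0 < a" and "a \<le> b"
  shows "\<exists>C. \<forall>eps \<in> {0<..1}. \<forall>y \<in> {a..b}. \<bar>(deriv ^^ k) (Q1 eps) y\<bar> \<le> C"
proof -
  have b: "0 < b" using assms by auto
  obtain B1 where B1: "B1 \<ge> 0" "\<And>y t. y \<in> {a..b} \<Longrightarrow> t \<in> {-b..b} \<Longrightarrow> \<bar>(dy ^^ k) EE y t\<bar> \<le> B1"
    using Alg_bound[OF dy_iter[OF EE_Alg] assms(1)] by blast
  obtain B2 where B2: "B2 \<ge> 0" "\<And>y t. y \<in> {a..b} \<Longrightarrow> t \<in> {-b..b} \<Longrightarrow> \<bar>(dy ^^ k) DD y t\<bar> \<le> B2"
    using Alg_bound[OF dy_iter[OF DD_Alg] assms(1)] by blast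
  show ?thesis
  proof (intro exI ballI)
    fix eps y assume e: "eps \<in> {0<..1::real}" and y: "y \<in> {a..b}"
    have y0: "0 < y" using y assms by auto
    have "y \<in> {0<..<2*b}" using y assms by auto
    then have eq: "(deriv ^^ k) (Q1 eps) y
           = J b (\<lambda>t. 1) ((dy ^^ k) EE) y + J b (\<lambda>t. cos (4 * t / eps)) ((dy ^^ k) DD) y"
      using deriv_Q[OF _ b, of eps k] e by auto
    have j1: "\<bar>J b (\<lambda>t. 1) ((dy ^^ k) EE) y\<bar> \<le> B1 * (2 * b)"
      by (rule J_bound[OF dy_iter[OF EE_Alg] _ _ y0]) (use B1(2)[OF y] b in \<open>auto intro: continuous_intros\<close>)
    have j2: "\<bar>J b (\<lambda>t. cos (4 * t / eps)) ((dy ^^ k) DD) y\<bar> \<le> B2 * (2 * b)"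
      by (rule J_bound[OF dy_iter[OF DD_Alg] _ _ y0]) (use B2(2)[OF y] b e in \<open>auto intro!: continuous_intros\<close>)
    show "\<bar>(deriv ^^ k) (Q1 eps) y\<bar> \<le> B1 * (2 * b) + B2 * (2 * b)"
      unfolding eq using j1 j2 by linarith
  qed
qed

end
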